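(* In the setting of the context (problem, KKT point $x^*$ satisfying LICQ, strict complementarity and strong second-order sufficiency, unique multiplier $\lambda^*$, $w^*=(x^*,\lambda^* )$), for all $\mu\in\mathbb{R}$ and $r\in\mathbb{R}^{n+m}$ independently sufficiently small there exists a function $w^{w^*,\mu,r}\colon\mathbb{R}\to\mathbb{R}^{n+m}$, $(d-1)$ times continuously differentiable on a neighborhood of $\rho\in[0,\|r\|]$, such that locally $$F^\mu\bigl(w^{w^*,\mu,r}(\rho)\bigr)=\rho\,\mathrm{nml}(r)\quad\text{and}\quad w^{w^*,\mu,r}(0)=w^{w^*}(\mu).$$
   Context: Problem: minimize $f(x)$ subject to $c_{\mathcal I}(x)\ge0$, $c_{\mathcal E}(x)=0$, with $f,c_i\colon\mathbb{R}^n\to\mathbb{R}$, $c=(c_{\mathcal I}^T,c_{\mathcal E}^T)^T\in\mathbb{R}^m$, and $d\ge3$ the smallest number of times each of $f,c_1,\dots,c_m$ is continuously differentiable. Notation: $g=\nabla f$, $A$ the Jacobian of $c$, $H(x,\lambda)$ the Hessian in $x$ of $f(x)-\lambda^Tc(x)$, $[v]_S$ components of $v$ indexed by $S$, uppercase = diagonal matrix of the lowercase vector, $e$ the all-ones vector, $w=(x,\lambda)$. $F^\mu(x,\lambda)=\bigl(g(x)-A(x)^T\lambda;\ C_{\mathcal I}(x)[\lambda]_{\mathcal I}-\mu e;\ c_{\mathcal E}(x)\bigr)$. Assumptions at $x^*$ with active set $\mathcal A(x^* )=\{i: c_i(x^* )=0\}$: LICQ (active constraint gradients linearly independent); strict complementarity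 (there is $\lambda^*$ with $g(x^* )=A(x^* )^T\lambda^*$, $C_{\mathcal I}(x^* )[\lambda^*]_{\mathcal I}=0$, $[\lambda^*]_{\mathcal I}\ge0$, $[\lambda^*]_i>0$ for $i\in\mathcal I\cap\mathcal A(x^* )$); strong second-order sufficiency (some $\omega>0$ with $p^TH(x^*,\lambda^* )p\ge\omega\|p\|^2$ whenever $\nabla c_i(x^* )^Tp=0$ for all $i\in\mathcal A(x^* )$). Let $w^{w^*,0}$ be the locally unique function, $(d-1)$ times continuously differentiable near $0$, with $F^0(w^{w^*,0}(r))=r$ locally and $w^{w^*,0}(0)=w^*$ (it exists by the implicit function theorem under these assumptions). The barrier trajectory is $w^{w^*}(\mu)=w^{w^*,0}\bigl((0,\mu e^T,0)^T\bigr)$, with blocks of sizes $n,m_{\mathcal I},m_{\mathcal E}$. For $r\in\mathbb{R}^{n+m}$, $\mathrm{nml}(r)=r/\|r\|$ if $r\neq0$ and $\mathrm{nml}(0)=0$. *)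

theory Defs
  imports "HOL-Analysis.Analysis"
begin

fun Ck_on :: "'a::real_normed_vector set \<Rightarrow> ('a \<Rightarrow> 'b::real_normed_vector) \<Rightarrow> nat \<Rightarrow> bool" where
  "Ck_on S g 0 \<longleftrightarrow> continuous_on S g"
| "Ck_on S g (Suc k) \<longleftrightarrow> (\<forall>x\<in>S. g differentiable (at x)) \<and>
      (\<forall>v. Ck_on S (\<lambda>x. frechet_derivative g (at x) v) k)"

definition grad :: "(real^'n \<Rightarrow> real) \<Rightarrow> real^'n \<Rightarrow> real^'n" where
  "grad \<phi> x = (\<chi> j. frechet_derivative \<phi> (at x) (axis j 1))"

definition jac :: "(real^'n \<Rightarrow> real^'m) \<Rightarrow> real^'n \<Rightarrow> real^'n^'m" where
  "jac c x = (\<chi> i. grad (\<lambda>y. c y $ i) x)"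

definition hess :: "(real^'n \<Rightarrow> real) \<Rightarrow> real^'n \<Rightarrow> real^'n^'n" where
  "hess \<phi> x = (\<chi> j k. frechet_derivative (\<lambda>y. frechet_derivative \<phi> (at y) (axis k 1)) (at x) (axis j 1))"

definition Hlag :: "(real^'n \<Rightarrow> real) \<Rightarrow> (real^'n \<Rightarrow> real^'m) \<Rightarrow> real^'n \<Rightarrow> real^'m \<Rightarrow> real^'n^'n" where
  "Hlag f c x lam = hess (\<lambda>y. f y - lam \<bullet> c y) x"

definition active :: "(real^'n \<Rightarrow> real^'m) \<Rightarrow> real^'n \<Rightarrow> 'm set" where
  "active c x = {i. c x $ i = 0}"

text \<open>Perturbed KKT map F^mu; constraints indexed by 'm, inequality indices I, equality indices -I.
  The second block collects C_I(x) lambda_I - mu e (on I) and c_E(x) (on -I).\<close>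
definition Fmu :: "(real^'n \<Rightarrow> real) \<Rightarrow> (real^'n \<Rightarrow> real^'m) \<Rightarrow> 'm set \<Rightarrow> real
    \<Rightarrow> (real^'n) \<times> (real^'m) \<Rightarrow> (real^'n) \<times> (real^'m)" where
  "Fmu f c I \<mu> w = (case w of (x, lam) \<Rightarrow>
     (grad f x - transpose (jac c x) *v lam,
      \<chi> i. if i \<in> I then c x $ i * lam $ i - \<mu> else c x $ i))"

definition nml :: "'a::real_normed_vector \<Rightarrow> 'a" where
  "nml r = (if r = 0 then 0 else r /\<^sub>R norm r)"

end

theory Submission
  imports Defs
begin

lemma Ck_on_cong:
  assumes "open S" "Ck_on S g k" "\<forall>x\<in>S. g x = h x"
  shows "Ck_on S h k"
  using assms
proof (induction k arbitrary: g h)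
  case 0
  then show ?case using continuous_on_cong by force
next
  case (Suc k)
  have diff: "\<forall>x\<in>S. h differentiable (at x)"
  proof
    fix x assume x: "x \<in> S"
    from Suc.prems(2) x have "g differentiable (at x)" by simp
    then show "h differentiable (at x)"
      using Suc.prems(1,3) x
      by (metis differentiable_def has_derivative_transform_within_open)
  qed
  have eq: "\<forall>x\<in>S. frechet_derivative g (at x) = frechet_derivative h (at x)"
  proof
    fix x assume x: "x \<in> S"
    from Suc.prems(2) x have "g differentiable (at x)" by simp
    then have "(g has_derivative frechet_derivative g (at x)) (at x)"
      using frechet_derivative_works by blast
    then have "(h has_derivative frechet_derivative g (at x)) (at x)"
      using Suc.prems(1,3) x has_derivative_transform_within_open by blast
    then show "frechet_derivative g (at x) = frechet_derivative h (at x)"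
      using frechet_derivative_at by blast
  qed
  show ?case
  proof -
    have "\<forall>v. Ck_on S (\<lambda>x. frechet_derivative h (at x) v) k"
    proof
      fix v
      have "Ck_on S (\<lambda>x. frechet_derivative g (at x) v) k" using Suc.prems(2) by simp
      then show "Ck_on S (\<lambda>x. frechet_derivative h (at x) v) k"
        using Suc.IH[OF Suc.prems(1)] eq by auto
    qed
    then show ?thesis using diff by simp
  qed
qed

lemma Ck_on_affine:
  fixes g :: "'a::real_normed_vector \<Rightarrow> 'b::real_normed_vector"
    and L :: "'b \<Rightarrow> 'c::real_normed_vector"
  assumes "open V" "Ck_on V g k" "bounded_linear L"
  shows "Ck_on ((\<lambda>x::real. p + x *\<^sub>R q) -` V) (\<lambda>x. L (g (p + x *\<^sub>R q))) k"
  using assms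
proof (induction k arbitrary: g L)
  case 0
  have c1: "continuous_on ((\<lambda>x::real. p + x *\<^sub>R q) -` V) (\<lambda>x. p + x *\<^sub>R q)"
    by (intro continuous_intros)
  have "continuous_on ((\<lambda>x::real. p + x *\<^sub>R q) -` V) (\<lambda>x. g (p + x *\<^sub>R q))"
    using continuous_on_compose2[OF _ c1, of V g] 0 by auto
  then show ?case
    using 0(3) continuous_on_compose[of _ "\<lambda>x. g (p + x *\<^sub>R q)" L]
      linear_continuous_on[OF 0(3)] by (simp add: o_def)
next
  case (Suc k)
  let ?a = "\<lambda>x::real. p + x *\<^sub>R q"
  let ?U = "?a -` V"
  have openU: "open ?U"
    by (rule open_vimage[OF Suc.prems(1)]) (intro continuous_intros)
  have der: "((\<lambda>x. L (g (?a x))) has_derivative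
      (\<lambda>t. L (frechet_derivative g (at (?a x)) (t *\<^sub>R q)))) (at x)" if x: "x \<in> ?U" for x
  proof -
    from Suc.prems(2) x have "g differentiable (at (?a x))" by simp
    then have gd: "(g has_derivative frechet_derivative g (at (?a x))) (at (?a x))"
      using frechet_derivative_works by blast
    have ad: "(?a has_derivative (\<lambda>t. t *\<^sub>R q)) (at x)"
      by (auto intro!: derivative_eq_intros)
    have "((\<lambda>x. g (?a x)) has_derivative (\<lambda>t. frechet_derivative g (at (?a x)) (t *\<^sub>R q))) (at x)"
      using has_derivative_compose[OF ad gd] by (simp add: o_def)
    then show ?thesis
      using bounded_linear.has_derivative[OF Suc.prems(3)] by blast
  qed
  have diff: "\<forall>x\<in>?U. (\<lambda>x. L (g (?a x))) differentiable (at x)"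
    using der differentiable_def by blast
  have "\<forall>v. Ck_on ?U (\<lambda>x. frechet_derivative (\<lambda>x. L (g (?a x))) (at x) v) k"
  proof
    fix v :: real
    let ?h = "\<lambda>y. frechet_derivative g (at y) q"
    let ?L' = "\<lambda>y. L (v *\<^sub>R y)"
    have hk: "Ck_on V ?h k" using Suc.prems(2) by simp
    have bl: "bounded_linear ?L'"
      using bounded_linear_compose[OF Suc.prems(3) bounded_linear_scaleR_right] by (simp add: o_def)
    have ih: "Ck_on ?U (\<lambda>x. ?L' (?h (?a x))) k"
      using Suc.IH[OF Suc.prems(1) hk bl] .
    have "\<forall>x\<in>?U. ?L' (?h (?a x)) = frechet_derivative (\<lambda>x. L (g (?a x))) (at x) v"
    proof
      fix x assume x: "x \<in> ?U"
      from Suc.prems(2) x have "g differentiable (at (?a x))" by simp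
      then have gd: "(g has_derivative frechet_derivative g (at (?a x))) (at (?a x))"
        using frechet_derivative_works by blast
      then have lin: "linear (frechet_derivative g (at (?a x)))"
        using has_derivative_linear by blast
      have "frechet_derivative (\<lambda>x. L (g (?a x))) (at x) =
            (\<lambda>t. L (frechet_derivative g (at (?a x)) (t *\<^sub>R q)))"
        using der[OF x] frechet_derivative_at by metis
      then show "?L' (?h (?a x)) = frechet_derivative (\<lambda>x. L (g (?a x))) (at x) v"
        using lin by (simp add: linear_scale)
    qed
    then show "Ck_on ?U (\<lambda>x. frechet_derivative (\<lambda>x. L (g (?a x))) (at x) v) k"
      by (rule Ck_on_cong[OF openU ih])
  qed
  then show ?case using diff by simp
qed

lemma Fmu_shift:
  "Fmu f c I \<mu> w = Fmu f c I 0 w - (0, \<chi> i. if i \<in> I then \<mu> else 0)"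
  by (cases w) (simp add: Fmu_def vec_eq_iff)

theorem corollary1:
  fixes f :: "real^'n \<Rightarrow> real" and c :: "real^'n \<Rightarrow> real^'m" and I :: "'m set"
    and d :: nat and xs :: "real^'n" and ls :: "real^'m"
    and W0 :: "(real^'n) \<times> (real^'m) \<Rightarrow> (real^'n) \<times> (real^'m)"
  assumes d: "d \<ge> 3"
    and smooth_f: "Ck_on UNIV f d"
    and smooth_c: "\<forall>i. Ck_on UNIV (\<lambda>x. c x $ i) d"
    and feas_I: "\<forall>i\<in>I. c xs $ i \<ge> 0"
    and feas_E: "\<forall>i\<in>-I. c xs $ i = 0"
    and LICQ: "\<forall>u. (\<Sum>i\<in>active c xs. u i *\<^sub>R grad (\<lambda>x. c x $ i) xs) = 0
                   \<longrightarrow> (\<forall>i\<in>active c xs. u i = 0)"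
    and stat: "grad f xs = transpose (jac c xs) *v ls"
    and compl: "\<forall>i\<in>I. c xs $ i * ls $ i = 0"
    and nonneg: "\<forall>i\<in>I. ls $ i \<ge> 0"
    and strict: "\<forall>i\<in>I \<inter> active c xs. ls $ i > 0"
    and SOSC: "\<exists>\<omega>>0. \<forall>p. (\<forall>i\<in>active c xs. grad (\<lambda>x. c x $ i) xs \<bullet> p = 0)
                   \<longrightarrow> p \<bullet> (Hlag f c xs ls *v p) \<ge> \<omega> * (norm p)\<^sup>2"
    and W0: "\<exists>V. open V \<and> 0 \<in> V \<and> Ck_on V W0 (d - 1) \<and>
               (\<forall>r\<in>V. Fmu f c I 0 (W0 r) = r) \<and> W0 0 = (xs, ls)"
  shows "\<exists>\<epsilon>>0. \<forall>\<mu> r. \<bar>\<mu>\<bar> < \<epsilon> \<and> norm r < \<epsilon> \<longrightarrow>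
           (\<exists>W :: real \<Rightarrow> (real^'n) \<times> (real^'m). \<exists>U. open U \<and> {0..norm r} \<subseteq> U \<and>
              Ck_on U W (d - 1) \<and>
              (\<forall>\<rho>\<in>U. Fmu f c I \<mu> (W \<rho>) = \<rho> *\<^sub>R nml r) \<and>
              W 0 = W0 (0, \<chi> i. if i \<in> I then \<mu> else 0))"
proof -
  obtain V where V: "open V" "0 \<in> V" "Ck_on V W0 (d - 1)"
    "\<forall>r\<in>V. Fmu f c I 0 (W0 r) = r" using W0 by blast
  obtain \<delta> where \<delta>: "\<delta> > 0" "ball 0 \<delta> \<subseteq> V" using V(1,2) open_contains_ball by blast
  define K where "K = real CARD('m) + 1"
  have K: "K \<ge> 1" unfolding K_def by simp
  define \<epsilon> where "\<epsilon> = \<delta> / (2 * K)"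
  have \<epsilon>: "\<epsilon> > 0" unfolding \<epsilon>_def using \<delta> K by simp
  have "\<forall>\<mu> r. \<bar>\<mu>\<bar> < \<epsilon> \<and> norm r < \<epsilon> \<longrightarrow>
           (\<exists>W :: real \<Rightarrow> (real^'n) \<times> (real^'m). \<exists>U. open U \<and> {0..norm r} \<subseteq> U \<and>
              Ck_on U W (d - 1) \<and>
              (\<forall>\<rho>\<in>U. Fmu f c I \<mu> (W \<rho>) = \<rho> *\<^sub>R nml r) \<and>
              W 0 = W0 (0, \<chi> i. if i \<in> I then \<mu> else 0))"
  proof (intro allI impI)
    fix \<mu> :: real and r :: "(real^'n) \<times> (real^'m)"
    assume a: "\<bar>\<mu>\<bar> < \<epsilon> \<and> norm r < \<epsilon>"
    define P :: "(real^'n) \<times> (real^'m)" where "P = (0, \<chi> i. if i \<in> I then \<mu> else 0)"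
    define q where "q = nml r"
    let ?a = "\<lambda>x::real. P + x *\<^sub>R q"
    define U where "U = ?a -` V"
    have openU: "open U" unfolding U_def
      by (rule open_vimage[OF V(1)]) (intro continuous_intros)
    have nq: "norm q \<le> 1" unfolding q_def nml_def by auto
    have nv: "norm (\<chi> i. if i \<in> I then \<mu> else 0 :: real^'m) \<le> real CARD('m) * \<bar>\<mu>\<bar>"
    proof -
      have "norm (\<chi> i. if i \<in> I then \<mu> else 0 :: real^'m) \<le> (\<Sum>i\<in>UNIV. \<bar>(\<chi> i. if i \<in> I then \<mu> else 0 :: real^'m) $ i\<bar>)"
        by (rule norm_le_l1_cart)
      also have "\<dots> \<le> (\<Sum>i\<in>(UNIV::'m set). \<bar>\<mu>\<bar>)"
        by (intro sum_mono) auto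
      finally show ?thesis by simp
    qed
    have nP: "norm P \<le> real CARD('m) * \<bar>\<mu>\<bar>"
      using nv unfolding P_def by (simp add: norm_Pair)
    have sub: "{0..norm r} \<subseteq> U"
    proof
      fix \<rho> assume "\<rho> \<in> {0..norm r}"
      then have \<rho>: "0 \<le> \<rho>" "\<rho> \<le> norm r" by auto
      have "norm (?a \<rho>) \<le> norm P + \<rho> * norm q"
        using norm_triangle_ineq[of P "\<rho> *\<^sub>R q"] \<rho> by simp
      also have "\<dots> \<le> real CARD('m) * \<bar>\<mu>\<bar> + \<rho>"
        using nP nq \<rho> mult_left_le[of "norm q" \<rho>] by linarith
      also have "\<dots> \<le> real CARD('m) * \<epsilon> + \<epsilon>"
        using a \<rho> by (intro add_mono mult_left_mono) auto
      also have "\<dots> = K * \<epsilon>" unfolding K_def by (simp add: algebra_simps)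
      also have "\<dots> < \<delta>" unfolding \<epsilon>_def using K \<delta> by (simp add: field_simps)
      finally have "?a \<rho> \<in> ball 0 \<delta>" by simp
      then show "\<rho> \<in> U" unfolding U_def using \<delta>(2) by auto
    qed
    have ck: "Ck_on U (\<lambda>x. W0 (?a x)) (d - 1)"
      unfolding U_def using Ck_on_affine[OF V(1) V(3) bounded_linear_ident] by simp
    have eqn: "\<forall>\<rho>\<in>U. Fmu f c I \<mu> (W0 (?a \<rho>)) = \<rho> *\<^sub>R nml r"
    proof
      fix \<rho> assume "\<rho> \<in> U"
      then have "?a \<rho> \<in> V" unfolding U_def by simp
      then show "Fmu f c I \<mu> (W0 (?a \<rho>)) = \<rho> *\<^sub>R nml r"
        using V(4) Fmu_shift[of f c I \<mu>] unfolding P_def q_def by simp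
    qed
    show "\<exists>W :: real \<Rightarrow> (real^'n) \<times> (real^'m). \<exists>U. open U \<and> {0..norm r} \<subseteq> U \<and>
              Ck_on U W (d - 1) \<and>
              (\<forall>\<rho>\<in>U. Fmu f c I \<mu> (W \<rho>) = \<rho> *\<^sub>R nml r) \<and>
              W 0 = W0 (0, \<chi> i. if i \<in> I then \<mu> else 0)"
      using openU sub ck eqn by (intro exI[of _ "\<lambda>x. W0 (?a x)"] exI[of _ U]) (simp add: P_def)
  qed
  then show ?thesis using \<epsilon> by blast
qed

end
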